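(* Let $A\subset\{1,2,3,\dots\}$ be a set whose natural density $d(A)=\lim_{n\to\infty}\#(A\cap[1,n])/n$ exists and satisfies $d(A)>0$. Let $F_A(s)=-\sum_{j\in A}\ln(1-e^{sj})$ for $s<0$. Then for every integer $m\ge0$, $$F_A^{(m)}(-s)\sim d(A)\,\zeta(2)\,\Gamma(m+1)\,\frac{1}{s^{m+1}},\quad\text{as } s\downarrow0.$$
   Context: $F_A$ is the fulcrum $s\mapsto\ln P_A(e^s)$ of $P_A(z)=\prod_{j\in A}(1-z^j)^{-1}$, the generating function of partitions with parts in $A$. $F_A^{(m)}$ is the $m$-th derivative. $\alpha(s)\sim\beta(s)$ means $\alpha(s)/\beta(s)\to1$. $\zeta$ is the Riemann zeta function and $\Gamma$ the Gamma function. *)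

theory Defs
  imports "HOL-Analysis.Analysis" "HOL-Library.Landau_Symbols"
begin

definition zeta_real :: "real \<Rightarrow> real" where
  "zeta_real s = (\<Sum>n. 1 / (real (Suc n)) powr s)"

definition fulcrum :: "nat set \<Rightarrow> real \<Rightarrow> real" where
  "fulcrum A s = - (\<Sum>j. if j \<in> A then ln (1 - exp (s * real j)) else 0)"

end

theory Submission
  imports Defs "HOL-Real_Asymp.Real_Asymp"
begin



lemma nonneg_summable_has_sum:
  fixes f :: "nat \<Rightarrow> real"
  assumes "\<And>n. f n \<ge> 0" "summable f"
  shows "(f has_sum suminf f) UNIV"
proof -
  have "f summable_on UNIV" using assms summable_on_UNIV_nonneg_real_iff by blast
  then have h: "(f has_sum infsum f UNIV) UNIV" by simp
  then have "f sums infsum f UNIV" by (rule has_sum_imp_sums)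
  then have "infsum f UNIV = suminf f" by (simp add: sums_iff)
  with h show ?thesis by simp
qed

lemma nonneg_swap:
  fixes t :: "nat \<Rightarrow> nat \<Rightarrow> real"
  assumes nn: "\<And>j k. t j k \<ge> 0" and s1: "\<And>k. summable (\<lambda>j. t j k)"
    and s2: "summable (\<lambda>k. \<Sum>j. t j k)"
  shows "summable (\<lambda>k. t j k)" "summable (\<lambda>j. \<Sum>k. t j k)"
    "(\<Sum>j. \<Sum>k. t j k) = (\<Sum>k. \<Sum>j. t j k)"
proof -
  have h1: "((\<lambda>j. t j k) has_sum (\<Sum>j. t j k)) UNIV" for k
    by (rule nonneg_summable_has_sum[OF nn s1])
  have h2: "((\<lambda>k. \<Sum>j. t j k) has_sum (\<Sum>k. \<Sum>j. t j k)) UNIV"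
    by (rule nonneg_summable_has_sum[OF _ s2]) (simp add: nn suminf_nonneg s1)
  have "(\<lambda>(k,j). t j k) summable_on Sigma UNIV (\<lambda>_. UNIV)"
    apply (rule summable_on_SigmaI[where g="\<lambda>k. \<Sum>j. t j k"])
    using h1 h2 nn by (auto simp: summable_on_def)
  then obtain S where S: "((\<lambda>(k,j). t j k) has_sum S) (UNIV \<times> UNIV)"
    by (auto simp: summable_on_def)
  have "((\<lambda>k. \<Sum>j. t j k) has_sum S) UNIV"
    using has_sum_SigmaD[where f="\<lambda>(k,j). t j k" and S=S and A=UNIV and B="\<lambda>_. UNIV" and g="\<lambda>k. \<Sum>j. t j k"] S h1 by auto
  then have "S = (\<Sum>k. \<Sum>j. t j k)"
    using h2 has_sum_unique by blast
  have S': "((\<lambda>(j,k). t j k) has_sum S) (UNIV \<times> UNIV)"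
    using S has_sum_swap[where f="\<lambda>(k,j). t j k" and S=S and A=UNIV and B=UNIV] by simp
  have sj: "(\<lambda>k. t j k) summable_on UNIV" for j
    using summable_on_SigmaD1[of "\<lambda>j k. t j k" UNIV "\<lambda>_. UNIV" j] S'
    by (auto simp: summable_on_def)
  show sk: "summable (\<lambda>k. t j k)" for j
    using sj summable_on_imp_summable by blast
  have h3: "((\<lambda>k. t j k) has_sum (\<Sum>k. t j k)) UNIV" for j
    by (rule nonneg_summable_has_sum[OF nn sk])
  have h4: "((\<lambda>j. \<Sum>k. t j k) has_sum S) UNIV"
    using has_sum_SigmaD[where f="\<lambda>(j,k). t j k" and S=S and A=UNIV and B="\<lambda>_. UNIV"] S' h3 by auto
  show "summable (\<lambda>j. \<Sum>k. t j k)"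
    using h4 has_sum_imp_sums sums_summable by blast
  show "(\<Sum>j. \<Sum>k. t j k) = (\<Sum>k. \<Sum>j. t j k)"
    using h4 has_sum_imp_sums sums_unique \<open>S = _\<close> by metis
qed


lemma binom_sums:
  fixes z :: real
  assumes "0 \<le> z" "z < 1"
  shows "(\<lambda>n. real ((n+p) choose p) * z^n) sums (1/(1-z)^(Suc p))"
proof (induction p)
  case 0
  then show ?case using geometric_sums[of z] assms by simp
next
  case (Suc p)
  have a: "summable (\<lambda>k. norm (real ((k+p) choose p) * z^k))"
    using Suc.IH assms by (simp add: sums_iff)
  have b: "summable (\<lambda>k. norm (z^k))"
    using assms by (simp add: summable_geometric)
  have c: "(\<lambda>k. \<Sum>i\<le>k. (real ((i+p) choose p) * z^i) * z^(k-i)) sums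
      ((\<Sum>k. real ((k+p) choose p) * z^k) * (\<Sum>k. z^k))"
    by (rule Cauchy_product_sums[OF a b])
  have e: "(\<Sum>i\<le>k. (real ((i+p) choose p) * z^i) * z^(k-i)) = real ((k + Suc p) choose Suc p) * z^k" for k
  proof -
    have "(\<Sum>i\<le>k. (real ((i+p) choose p) * z^i) * z^(k-i)) = (\<Sum>i\<le>k. real ((p+i) choose i) * z^k)"
    proof (intro sum.cong refl)
      fix i assume "i \<in> {..k}"
      then have ik: "i + (k - i) = k" by simp
      have "(i+p) choose p = (p+i) choose i"
        using binomial_symmetric[of i "p+i"] by (simp add: add.commute)
      moreover have "z^i * z^(k-i) = z^k" using ik by (metis power_add)
      ultimately show "(real ((i+p) choose p) * z^i) * z^(k-i) = real ((p+i) choose i) * z^k"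
        by (simp add: mult.assoc)
    qed
    also have "\<dots> = real (\<Sum>i\<le>k. (p+i) choose i) * z^k"
      by (simp add: sum_distrib_right)
    also have "(\<Sum>i\<le>k. (p+i) choose i) = Suc (p+k) choose k" by (rule sum_choose_lower)
    also have "Suc (p+k) choose k = (k + Suc p) choose Suc p"
      using binomial_symmetric[of k "Suc (p+k)"] by (simp add: add.commute)
    finally show ?thesis .
  qed
  have "(\<Sum>k. real ((k+p) choose p) * z^k) * (\<Sum>k. z^k) = 1/(1-z)^(Suc (Suc p))"
    using Suc.IH geometric_sums[of z] assms by (simp add: sums_iff)
  with c e show ?case by simp
qed

lemma fact_binom_rec:
  "fact (Suc p) * real ((n + Suc p) choose Suc p) = real (n + Suc p) * (fact p * real ((n+p) choose p))"
proof -
  have "Suc (n+p) * ((n+p) choose p) = (Suc (n+p) choose Suc p) * Suc p"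
    by (rule Suc_times_binomial_eq)
  then have "real (Suc (n+p)) * real ((n+p) choose p) = real (Suc (n+p) choose Suc p) * real (Suc p)"
    by (metis of_nat_mult)
  then show ?thesis by (simp add: algebra_simps)
qed

lemma pow_le_fact_binom: "real (n+1) ^ p \<le> fact p * real ((n+p) choose p)"
proof (induction p)
  case 0 then show ?case by simp
next
  case (Suc p)
  have "real (n+1) ^ Suc p = real (n+1) * real (n+1)^p" by simp
  also have "\<dots> \<le> real (n + Suc p) * (fact p * real ((n+p) choose p))"
    by (intro mult_mono Suc.IH) auto
  also have "\<dots> = fact (Suc p) * real ((n + Suc p) choose Suc p)"
    by (simp only: fact_binom_rec)
  finally show ?case .
qed

lemma fact_binom_le_pow: "fact p * real ((n+p) choose p) \<le> real (n+p) ^ p"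
proof (induction p)
  case 0 then show ?case by simp
next
  case (Suc p)
  have "fact (Suc p) * real ((n + Suc p) choose Suc p) = real (n + Suc p) * (fact p * real ((n+p) choose p))"
    by (simp only: fact_binom_rec)
  also have "\<dots> \<le> real (n + Suc p) * real (n+p)^p"
    by (intro mult_left_mono Suc.IH) auto
  also have "\<dots> \<le> real (n + Suc p) * real (n + Suc p)^p"
    by (intro mult_left_mono power_mono) auto
  finally show ?case by simp
qed

lemma pow_series_bound:
  fixes z :: real
  assumes "0 \<le> z" "z < 1"
  shows "summable (\<lambda>n. real n ^ p * z^n)" "(\<Sum>n. real n ^ p * z^n) \<le> fact p / (1-z)^(Suc p)"
proof -
  have s: "(\<lambda>n. fact p * (real ((n+p) choose p) * z^n)) sums (fact p * (1/(1-z)^(Suc p)))"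
    by (intro sums_mult binom_sums assms)
  have le: "real n ^ p * z^n \<le> fact p * (real ((n+p) choose p) * z^n)" for n
  proof -
    have "real n ^ p \<le> real (n+1) ^ p" by (intro power_mono) auto
    also have "\<dots> \<le> fact p * real ((n+p) choose p)" by (rule pow_le_fact_binom)
    finally show ?thesis using assms by (simp add: mult.assoc[symmetric] mult_right_mono)
  qed
  show sm: "summable (\<lambda>n. real n ^ p * z^n)"
    by (rule summable_comparison_test'[OF sums_summable[OF s]]) (use le assms in auto)
  have "(\<Sum>n. real n ^ p * z^n) \<le> (\<Sum>n. fact p * (real ((n+p) choose p) * z^n))"
    by (intro suminf_le sm sums_summable[OF s] le)
  then show "(\<Sum>n. real n ^ p * z^n) \<le> fact p / (1-z)^(Suc p)" using s by (simp add: sums_iff)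
qed

definition Pm :: "nat \<Rightarrow> real \<Rightarrow> real" where
  "Pm m z = (\<Sum>j. if j = 0 then 0 else real j ^ m * z ^ j)"

lemma Pm_bounds:
  fixes z :: real
  assumes "0 < z" "z < 1"
  shows "summable (\<lambda>j. if j = 0 then 0 else real j ^ m * z ^ j)"
    "Pm m z \<le> z * fact m / (1-z)^(Suc m)"
    "z^(Suc m) * fact m / (1-z)^(Suc m) \<le> Pm m z"
proof -
  define f where "f j = (if j = 0 then 0 else real j ^ m * z ^ j)" for j
  have s: "(\<lambda>n. z * fact m * (real ((n+m) choose m) * z^n)) sums (z * fact m * (1/(1-z)^(Suc m)))"
    by (intro sums_mult binom_sums) (use assms in auto)
  have le: "f (Suc n) \<le> z * fact m * (real ((n+m) choose m) * z^n)" for n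
  proof -
    have "f (Suc n) = z * (real (n+1) ^ m * z^n)" by (simp add: f_def)
    also have "\<dots> \<le> z * (fact m * real ((n+m) choose m) * z^n)"
      by (intro mult_left_mono mult_right_mono pow_le_fact_binom) (use assms in auto)
    finally show ?thesis by (simp add: mult_ac)
  qed
  have f0: "f j \<ge> 0" for j using assms by (simp add: f_def)
  have ss: "summable (\<lambda>n. f (Suc n))"
    by (rule summable_comparison_test'[OF sums_summable[OF s]]) (use le f0 in auto)
  then have smf: "summable f" by (simp add: summable_Suc_iff)
  then show sm: "summable (\<lambda>j. if j = 0 then 0 else real j ^ m * z ^ j)"
    by (simp add: f_def[abs_def])
  have Pf: "Pm m z = suminf f" by (simp add: Pm_def f_def[abs_def])
  have "Pm m z = (\<Sum>n. f (Suc n))"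
    using suminf_split_head[OF smf] Pf by (simp add: f_def)
  also have "\<dots> \<le> (\<Sum>n. z * fact m * (real ((n+m) choose m) * z^n))"
    by (intro suminf_le ss sums_summable[OF s] le)
  also have "\<dots> = z * fact m / (1-z)^(Suc m)" using s by (simp add: sums_iff)
  finally show "Pm m z \<le> z * fact m / (1-z)^(Suc m)" .
  have s2: "(\<lambda>n. z^(Suc m) * fact m * (real ((n+m) choose m) * z^n)) sums (z^(Suc m) * fact m * (1/(1-z)^(Suc m)))"
    by (intro sums_mult binom_sums) (use assms in auto)
  have le2: "z^(Suc m) * fact m * (real ((n+m) choose m) * z^n) \<le> f (n + Suc m)" for n
  proof -
    have "z^(Suc m) * fact m * (real ((n+m) choose m) * z^n) = (fact m * real ((n+m) choose m)) * z^(n + Suc m)"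
      by (simp add: power_add mult_ac)
    also have "\<dots> \<le> real (n+m)^m * z^(n + Suc m)"
      by (intro mult_right_mono fact_binom_le_pow) (use assms in auto)
    also have "\<dots> \<le> real (n + Suc m)^m * z^(n + Suc m)"
      by (intro mult_right_mono power_mono) (use assms in auto)
    also have "\<dots> = f (n + Suc m)" by (simp add: f_def)
    finally show ?thesis .
  qed
  have "z^(Suc m) * fact m / (1-z)^(Suc m) = (\<Sum>n. z^(Suc m) * fact m * (real ((n+m) choose m) * z^n))"
    using s2 by (simp add: sums_iff)
  also have "\<dots> \<le> (\<Sum>n. f (n + Suc m))"
    by (intro suminf_le sums_summable[OF s2] le2) (use smf summable_iff_shift in blast)
  also have "\<dots> \<le> Pm m z"
  proof -
    have "Pm m z = (\<Sum>n. f (n + Suc m)) + (\<Sum>i<Suc m. f i)"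
      unfolding Pf by (rule suminf_split_initial_segment[OF smf])
    moreover have "(\<Sum>i<Suc m. f i) \<ge> 0" by (intro sum_nonneg f0)
    ultimately show ?thesis by linarith
  qed
  finally show "z^(Suc m) * fact m / (1-z)^(Suc m) \<le> Pm m z" .
qed






lemma sbp:
  fixes b :: "nat \<Rightarrow> real"
  shows "(\<Sum>j\<le>n. b j * real j ^ m) = (\<Sum>j\<le>n. b j) * real n ^ m
     - (\<Sum>j<n. (\<Sum>i\<le>j. b i) * (real (Suc j) ^ m - real j ^ m))"
proof (induction n)
  case 0 then show ?case by simp
next
  case (Suc n)
  show ?case by (simp add: Suc.IH algebra_simps)
qed

lemma Qbound:
  fixes b :: "nat \<Rightarrow> real"
  assumes Rb: "\<And>\<epsilon>. \<epsilon> > 0 \<Longrightarrow> \<exists>M. \<forall>n. \<bar>\<Sum>j\<le>n. b j\<bar> \<le> M + \<epsilon> * real n"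
    and e: "\<epsilon> > 0"
  shows "\<exists>C\<ge>0. \<forall>n. \<bar>\<Sum>j\<le>n. b j * real j ^ m\<bar> \<le> C * real n ^ m + \<epsilon> * real n ^ Suc m"
proof -
  obtain M where M: "\<And>n. \<bar>\<Sum>j\<le>n. b j\<bar> \<le> M + \<epsilon>/2 * real n"
    using Rb[of "\<epsilon>/2"] e by auto
  define R where "R n = (\<Sum>j\<le>n. b j)" for n
  define K where "K j = real (Suc j) ^ m - real j ^ m" for j
  have K0: "K j \<ge> 0" for j unfolding K_def by (intro diff_ge_0_iff_ge[THEN iffD2] power_mono) auto
  have M0: "M \<ge> 0" using M[of 0] by (auto simp: R_def)
  have sumK: "(\<Sum>j<n. K j) \<le> real n ^ m" for n
  proof -
    have "(\<Sum>j<n. K j) = real n ^ m - real 0 ^ m"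
      unfolding K_def by (rule sum_lessThan_telescope)
    then show ?thesis by simp
  qed
  show ?thesis
  proof (intro exI[of _ "2*M"] conjI allI)
    show "2*M \<ge> 0" using M0 by simp
    fix n
    have "\<bar>\<Sum>j\<le>n. b j * real j ^ m\<bar> = \<bar>R n * real n ^ m - (\<Sum>j<n. R j * K j)\<bar>"
      unfolding R_def K_def by (subst sbp) simp
    also have "\<dots> \<le> \<bar>R n\<bar> * real n ^ m + (\<Sum>j<n. \<bar>R j\<bar> * K j)"
    proof -
      have "\<bar>\<Sum>j<n. R j * K j\<bar> \<le> (\<Sum>j<n. \<bar>R j * K j\<bar>)" by (rule sum_abs)
      also have "\<dots> = (\<Sum>j<n. \<bar>R j\<bar> * K j)" using K0 by (simp add: abs_mult)
      finally show ?thesis by (simp add: abs_mult abs_triangle_ineq4 order_trans[OF abs_triangle_ineq4])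
    qed
    also have "\<dots> \<le> (M + \<epsilon>/2 * real n) * real n ^ m + (\<Sum>j<n. (M + \<epsilon>/2 * real n) * K j)"
    proof -
      have 1: "\<bar>R n\<bar> * real n ^ m \<le> (M + \<epsilon>/2 * real n) * real n ^ m"
        using M[of n] by (intro mult_right_mono) (auto simp: R_def)
      have 2: "\<bar>R j\<bar> * K j \<le> (M + \<epsilon> / 2 * real n) * K j" if "j \<in> {..<n}" for j
      proof -
        have "\<bar>R j\<bar> \<le> M + \<epsilon> / 2 * real n"
          using M[of j] e that by (auto simp: R_def intro: order_trans)
        then show ?thesis using K0 by (intro mult_right_mono) auto
      qed
      have 3: "(\<Sum>j<n. \<bar>R j\<bar> * K j) \<le> (\<Sum>j<n. (M + \<epsilon> / 2 * real n) * K j)"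
        by (rule sum_mono) (rule 2)
      show ?thesis using 1 3 by linarith
    qed
    also have "\<dots> = (M + \<epsilon>/2 * real n) * (real n ^ m + (\<Sum>j<n. K j))"
      by (simp only: sum_distrib_left[symmetric] distrib_left)
    also have "\<dots> \<le> (M + \<epsilon>/2 * real n) * (2 * real n ^ m)"
      using sumK[of n] M0 e by (intro mult_left_mono) auto
    also have "\<dots> = (2*M) * real n ^ m + \<epsilon> * real n ^ Suc m"
      by (simp add: algebra_simps)
    finally show "\<bar>\<Sum>j\<le>n. b j * real j ^ m\<bar> \<le> (2*M) * real n ^ m + \<epsilon> * real n ^ Suc m" .
  qed
qed

lemma partial_sums_series:
  fixes x :: "nat \<Rightarrow> real" and z :: real
  assumes "0 \<le> z" "z < 1" "summable (\<lambda>j. \<bar>x j\<bar> * z^j)"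
  shows "(\<lambda>n. (\<Sum>j\<le>n. x j) * z^n) sums ((\<Sum>j. x j * z^j) / (1-z))"
proof -
  have a: "summable (\<lambda>k. norm (x k * z^k))" using assms by (simp add: abs_mult)
  have b: "summable (\<lambda>k. norm (z^k))" using assms by (simp add: summable_geometric)
  have c: "(\<lambda>k. \<Sum>i\<le>k. (x i * z^i) * z^(k-i)) sums ((\<Sum>k. x k * z^k) * (\<Sum>k. z^k))"
    by (rule Cauchy_product_sums[OF a b])
  have e: "(\<Sum>i\<le>k. (x i * z^i) * z^(k-i)) = (\<Sum>j\<le>k. x j) * z^k" for k
  proof -
    have "(\<Sum>i\<le>k. (x i * z^i) * z^(k-i)) = (\<Sum>i\<le>k. x i * z^k)"
    proof (intro sum.cong refl)
      fix i assume "i \<in> {..k}"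
      then have ik: "i + (k - i) = k" by simp
      have "z^i * z^(k-i) = z^k" using ik by (metis power_add)
      then show "(x i * z^i) * z^(k-i) = x i * z^k" by (simp add: mult.assoc)
    qed
    then show ?thesis by (simp add: sum_distrib_right)
  qed
  have "(\<Sum>k. z^k) = 1/(1-z)" using geometric_sums[of z] assms by (simp add: sums_iff)
  with c e show ?thesis by simp
qed


lemma lim_u_over: "((\<lambda>u::real. u / (1 - exp (-u))) \<longlongrightarrow> 1) (at_right 0)"
  by real_asymp

lemma alg_Bd:
  fixes w u C F e G :: real
  assumes "w > 0"
  shows "u^(Suc m) * w * (C * (F / w^Suc m) + e * (G / w^Suc (Suc m)))
       = C * F * u * (u/w)^m + e * G * (u/w)^(Suc m)"
  using assms by (simp add: power_divide field_simps)

lemma abel_error: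
  fixes b :: "nat \<Rightarrow> real"
  assumes bb: "\<And>j. \<bar>b j\<bar> \<le> B"
    and Rb: "\<And>\<epsilon>. \<epsilon> > 0 \<Longrightarrow> \<exists>M. \<forall>n. \<bar>\<Sum>j\<le>n. b j\<bar> \<le> M + \<epsilon> * real n"
  shows "((\<lambda>u. u^(Suc m) * (\<Sum>j. b j * real j ^ m * exp(-u)^j)) \<longlongrightarrow> 0) (at_right 0)"
proof -
  have key: "eventually (\<lambda>u. \<bar>u^(Suc m) * (\<Sum>j. b j * real j^m * exp(-u)^j)\<bar> < e) (at_right 0)"
    if e: "e > 0" for e
  proof -
    define \<epsilon> where "\<epsilon> = e / (2 * fact (Suc m))"
    have \<epsilon>: "\<epsilon> > 0" using e by (simp add: \<epsilon>_def)
    obtain C where C0: "C \<ge> 0" and C: "\<And>n. \<bar>\<Sum>j\<le>n. b j * real j^m\<bar> \<le> C * real n^m + \<epsilon> * real n^Suc m"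
      using Qbound[OF Rb \<epsilon>, of m] by blast
    define Bd where "Bd u = C * fact m * u * (u/(1-exp(-u)))^m + \<epsilon> * fact (Suc m) * (u/(1-exp(-u)))^(Suc m)" for u :: real
    have lim: "(Bd \<longlongrightarrow> C * fact m * 0 * 1^m + \<epsilon> * fact (Suc m) * 1^Suc m) (at_right 0)"
      unfolding Bd_def by (intro tendsto_intros lim_u_over)
    have "C * fact m * 0 * 1^m + \<epsilon> * fact (Suc m) * 1^Suc m < e"
      using e by (simp add: \<epsilon>_def)
    then have ev1: "eventually (\<lambda>u. Bd u < e) (at_right 0)"
      by (rule order_tendstoD[OF lim])
    have ev2: "eventually (\<lambda>u. \<bar>u^(Suc m) * (\<Sum>j. b j * real j^m * exp(-u)^j)\<bar> \<le> Bd u) (at_right 0)"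
      using eventually_at_right_less[of 0]
    proof eventually_elim
      case (elim u)
      define z where "z = exp (-u)"
      have z0: "0 < z" and z1: "z < 1" using elim by (auto simp: z_def)
      define Q where "Q n = (\<Sum>j\<le>n. b j * real j^m)" for n
      define E where "E = (\<Sum>j. b j * real j^m * z^j)"
      have sx: "summable (\<lambda>j. \<bar>b j * real j^m\<bar> * z^j)"
      proof (rule summable_comparison_test'[where g="\<lambda>j. B * (real j^m * z^j)"])
        show "summable (\<lambda>j. B * (real j^m * z^j))"
          by (intro summable_mult pow_series_bound) (use z0 z1 in auto)
        fix j :: nat
        have "\<bar>b j * real j^m\<bar> * z^j = \<bar>b j\<bar> * (real j^m * z^j)" using z0 by (simp add: abs_mult)
        also have "\<dots> \<le> B * (real j^m * z^j)" using bb[of j] z0 by (intro mult_right_mono) auto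
        finally show "norm (\<bar>b j * real j^m\<bar> * z^j) \<le> B * (real j^m * z^j)" using z0 by simp
      qed
      have sQ: "(\<lambda>n. Q n * z^n) sums (E / (1-z))"
        unfolding Q_def E_def using partial_sums_series[OF _ z1 sx] z0 by simp
      have s1: "summable (\<lambda>n. real n ^ m * z^n)" "summable (\<lambda>n. real n ^ Suc m * z^n)"
        using pow_series_bound(1)[of z m] pow_series_bound(1)[of z "Suc m"] z0 z1 by auto
      have s2: "summable (\<lambda>n. C * (real n ^ m * z^n) + \<epsilon> * (real n ^ Suc m * z^n))"
        by (intro summable_add summable_mult s1)
      have le: "\<bar>Q n * z^n\<bar> \<le> C * (real n ^ m * z^n) + \<epsilon> * (real n ^ Suc m * z^n)" for n
      proof -
        have "\<bar>Q n * z^n\<bar> = \<bar>Q n\<bar> * z^n" using z0 by (simp add: abs_mult)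
        also have "\<dots> \<le> (C * real n^m + \<epsilon> * real n^Suc m) * z^n"
          using C[of n] z0 unfolding Q_def by (intro mult_right_mono) auto
        finally show ?thesis by (simp add: algebra_simps)
      qed
      have sa: "summable (\<lambda>n. \<bar>Q n * z^n\<bar>)"
        by (rule summable_comparison_test'[OF s2]) (use le in auto)
      have "\<bar>E / (1-z)\<bar> = \<bar>\<Sum>n. Q n * z^n\<bar>" using sQ by (simp add: sums_iff)
      also have "\<dots> \<le> (\<Sum>n. \<bar>Q n * z^n\<bar>)" by (rule summable_rabs[OF sa])
      also have "\<dots> \<le> (\<Sum>n. C * (real n ^ m * z^n) + \<epsilon> * (real n ^ Suc m * z^n))"
        by (intro suminf_le sa s2 le)
      also have "\<dots> = C * (\<Sum>n. real n ^ m * z^n) + \<epsilon> * (\<Sum>n. real n ^ Suc m * z^n)"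
        using s1 by (simp add: suminf_add[symmetric] suminf_mult[symmetric] summable_mult)
      also have "\<dots> \<le> C * (fact m / (1-z)^Suc m) + \<epsilon> * (fact (Suc m) / (1-z)^Suc (Suc m))"
        using pow_series_bound[of z m] pow_series_bound[of z "Suc m"] z0 z1 C0 \<epsilon>
        by (intro add_mono mult_left_mono) auto
      finally have Eb: "\<bar>E / (1-z)\<bar> \<le> C * (fact m / (1-z)^Suc m) + \<epsilon> * (fact (Suc m) / (1-z)^Suc (Suc m))" .
      have "\<bar>u^(Suc m) * E\<bar> = u^(Suc m) * (1-z) * \<bar>E / (1-z)\<bar>"
        using elim z1 by (simp add: abs_mult)
      also have "\<dots> \<le> u^(Suc m) * (1-z) * (C * (fact m / (1-z)^Suc m) + \<epsilon> * (fact (Suc m) / (1-z)^Suc (Suc m)))"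
        using elim z1 by (intro mult_left_mono Eb) auto
      also have "\<dots> = Bd u"
        using z1 unfolding Bd_def z_def[symmetric] by (intro alg_Bd) simp
      finally show ?case unfolding E_def z_def .
    qed
    show ?thesis using ev1 ev2 by eventually_elim simp
  qed
  show ?thesis unfolding tendsto_iff dist_real_def using key by simp
qed




lemma pow_le_fact_exp:
  fixes x :: real
  assumes "x \<ge> 0"
  shows "x^n \<le> fact n * exp x"
proof -
  have s: "(\<lambda>k. x^k /\<^sub>R fact k) sums exp x" by (rule exp_converges)
  have "sum (\<lambda>k. x^k /\<^sub>R fact k) {n} \<le> exp x"
    using sum_le_suminf[OF sums_summable[OF s], of "{n}"] s assms by (simp add: sums_iff)
  then have "x^n / fact n \<le> exp x" by (simp add: divide_inverse_commute)
  then show ?thesis by (simp add: divide_le_eq mult.commute)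
qed

lemma lim_Pm: "((\<lambda>u. u^Suc m * Pm m (exp(-u))) \<longlongrightarrow> fact m) (at_right 0)"
proof (rule tendsto_sandwich)
  define L where "L u = fact m * exp(-u)^Suc m * (u/(1-exp(-u)))^Suc m" for u :: real
  define U where "U u = fact m * exp(-u) * (u/(1-exp(-u)))^Suc m" for u :: real
  show "eventually (\<lambda>u. L u \<le> u^Suc m * Pm m (exp(-u))) (at_right 0)"
    using eventually_at_right_less[of 0]
  proof eventually_elim
    case (elim u)
    have z: "0 < exp(-u)" "exp(-u) < 1" using elim by auto
    have "L u = u^Suc m * (exp (-u) ^ Suc m * fact m / (1 - exp (-u)) ^ Suc m)"
      unfolding L_def by (simp add: power_divide)
    also have "\<dots> \<le> u^Suc m * Pm m (exp(-u))"
      using Pm_bounds(3)[OF z] elim by (intro mult_left_mono) auto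
    finally show ?case .
  qed
  show "eventually (\<lambda>u. u^Suc m * Pm m (exp(-u)) \<le> U u) (at_right 0)"
    using eventually_at_right_less[of 0]
  proof eventually_elim
    case (elim u)
    have z: "0 < exp(-u)" "exp(-u) < 1" using elim by auto
    have "u^Suc m * Pm m (exp(-u)) \<le> u^Suc m * (exp (-u) * fact m / (1 - exp (-u)) ^ Suc m)"
      using Pm_bounds(2)[OF z] elim by (intro mult_left_mono) auto
    also have "\<dots> = U u"
      unfolding U_def by (simp add: power_divide)
    finally show ?case .
  qed
  have "(L \<longlongrightarrow> fact m * exp(-0)^Suc m * 1^Suc m) (at_right 0)"
    unfolding L_def by (intro tendsto_intros lim_u_over)
  then show "(L \<longlongrightarrow> fact m) (at_right 0)" by simp
  have "(U \<longlongrightarrow> fact m * exp(-0) * 1^Suc m) (at_right 0)"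
    unfolding U_def by (intro tendsto_intros lim_u_over)
  then show "(U \<longlongrightarrow> fact m) (at_right 0)" by simp
qed

lemma bound_Pm:
  fixes u :: real
  assumes u: "u > 0"
  shows "u^Suc m * Pm m (exp(-u)) \<le> fact m * fact (Suc m) * exp 1"
proof -
  have z: "0 < exp(-u)" "exp(-u) < 1" using u by auto
  have "u^Suc m * Pm m (exp(-u)) \<le> u^Suc m * (exp (-u) * fact m / (1 - exp (-u)) ^ Suc m)"
    using Pm_bounds(2)[OF z] u by (intro mult_left_mono) auto
  also have "\<dots> = fact m * exp(-u) * (u/(1-exp(-u)))^Suc m"
    by (simp add: power_divide)
  also have "\<dots> \<le> fact m * exp(-u) * (1+u)^Suc m"
  proof -
    have "1 + u \<le> exp u" by simp
    then have "exp(-u) * (1+u) \<le> 1" by (simp add: exp_minus field_simps)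
    then have "u \<le> (1+u) * (1 - exp(-u))" using u by (simp add: algebra_simps)
    then have "u/(1-exp(-u)) \<le> 1+u" using z by (simp add: divide_le_eq)
    then show ?thesis using z u by (intro mult_left_mono power_mono) auto
  qed
  also have "\<dots> \<le> fact m * exp(-u) * (fact (Suc m) * exp (1+u))"
    using u by (intro mult_left_mono pow_le_fact_exp) auto
  also have "\<dots> = fact m * fact (Suc m) * exp 1"
    by (simp add: exp_add exp_minus field_simps)
  finally show ?thesis .
qed

definition ind :: "nat set \<Rightarrow> nat \<Rightarrow> real" where
  "ind A j = (if j \<in> A then 1 else 0)"

definition SA :: "nat set \<Rightarrow> nat \<Rightarrow> real \<Rightarrow> real" where
  "SA A m z = (\<Sum>j. ind A j * real j ^ m * z ^ j)"

lemma SA_le_Pm: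
  assumes "A \<subseteq> {1..}" "0 < z" "z < 1"
  shows "summable (\<lambda>j. ind A j * real j ^ m * z ^ j)" "SA A m z \<le> Pm m z"
proof -
  have le: "ind A j * real j ^ m * z ^ j \<le> (if j = 0 then 0 else real j ^ m * z ^ j)" for j
    using assms by (auto simp: ind_def)
  have nn: "0 \<le> ind A j * real j ^ m * z ^ j" for j using assms by (auto simp: ind_def)
  show s: "summable (\<lambda>j. ind A j * real j ^ m * z ^ j)"
    by (rule summable_comparison_test'[OF Pm_bounds(1)[where m=m, OF assms(2,3)]]) (use le nn in auto)
  show "SA A m z \<le> Pm m z"
    unfolding SA_def Pm_def by (intro suminf_le s Pm_bounds(1)[where m=m, OF assms(2,3)] le)
qed

lemma card_sum_ind: "real (card (A \<inter> {1..n})) = (\<Sum>j\<in>{1..n}. ind A j)"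
proof -
  have "card (A \<inter> {1..n}) = card ({1..n} \<inter> A)" by (simp add: Int_commute)
  also have "\<dots> = (\<Sum>j\<in>{1..n} \<inter> A. 1)" by simp
  also have "\<dots> = (\<Sum>j\<in>{1..n}. if j \<in> A then 1 else 0)" by (rule sum.inter_restrict) simp
  finally have "real (card (A \<inter> {1..n})) = real (\<Sum>j\<in>{1..n}. if j \<in> A then 1 else 0)" by simp
  also have "\<dots> = (\<Sum>j\<in>{1..n}. ind A j)" unfolding of_nat_sum by (intro sum.cong) (auto simp: ind_def)
  finally show ?thesis .
qed

lemma SA_lim:
  assumes A: "A \<subseteq> {1..}"
    and dens: "(\<lambda>n. real (card (A \<inter> {1..n})) / real n) \<longlonglongrightarrow> d"
  shows "((\<lambda>u. u^Suc m * SA A m (exp(-u))) \<longlongrightarrow> d * fact m) (at_right 0)"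
proof -
  define b where "b j = (if j = 0 then 0 else ind A j - d)" for j
  have bb: "\<bar>b j\<bar> \<le> 1 + \<bar>d\<bar>" for j by (auto simp: b_def ind_def)
  have Rn: "(\<Sum>j\<le>n. b j) = real (card (A \<inter> {1..n})) - d * real n" for n
  proof (induction n)
    case 0 then show ?case by (simp add: b_def)
  next
    case (Suc n)
    have "real (card (A \<inter> {1..Suc n})) = real (card (A \<inter> {1..n})) + ind A (Suc n)"
      unfolding card_sum_ind by (simp add: atLeastAtMostSuc_conv)
    then show ?case using Suc.IH by (simp add: b_def algebra_simps)
  qed
  have Rb: "\<exists>M. \<forall>n. \<bar>\<Sum>j\<le>n. b j\<bar> \<le> M + \<epsilon> * real n" if e: "\<epsilon> > 0" for \<epsilon>
  proof -
    obtain N where N: "\<And>n. n \<ge> N \<Longrightarrow> \<bar>real (card (A \<inter> {1..n})) / real n - d\<bar> < \<epsilon>"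
      using dens e unfolding LIMSEQ_def dist_real_def by blast
    define M where "M = (\<Sum>n<Suc N. \<bar>\<Sum>j\<le>n. b j\<bar>)"
    have M0: "M \<ge> 0" unfolding M_def by (intro sum_nonneg) auto
    show ?thesis
    proof (intro exI allI)
      fix n
      show "\<bar>\<Sum>j\<le>n. b j\<bar> \<le> M + \<epsilon> * real n"
      proof (cases "n \<le> N")
        case True
        then have "\<bar>\<Sum>j\<le>n. b j\<bar> \<le> M"
          unfolding M_def by (intro member_le_sum[where f="\<lambda>n. \<bar>\<Sum>j\<le>n. b j\<bar>"]) auto
        then show ?thesis using e by (simp add: add_increasing2)
      next
        case False
        then have n0: "real n > 0" by simp
        have "\<bar>real (card (A \<inter> {1..n})) / real n - d\<bar> < \<epsilon>" using N False by simp
        then have "\<bar>(real (card (A \<inter> {1..n})) - d * real n) / real n\<bar> < \<epsilon>"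
          using n0 by (simp add: diff_divide_distrib)
        then have "\<bar>real (card (A \<inter> {1..n})) - d * real n\<bar> / real n < \<epsilon>"
          using n0 by (simp add: abs_divide)
        then have "\<bar>real (card (A \<inter> {1..n})) - d * real n\<bar> < \<epsilon> * real n"
          using n0 by (simp add: pos_divide_less_eq)
        then show ?thesis using Rn[of n] M0 by simp
      qed
    qed
  qed
  have err: "((\<lambda>u. u^(Suc m) * (\<Sum>j. b j * real j ^ m * exp(-u)^j)) \<longlongrightarrow> 0) (at_right 0)"
    by (rule abel_error[OF bb Rb])
  have eq: "eventually (\<lambda>u. u^Suc m * SA A m (exp(-u)) =
      d * (u^Suc m * Pm m (exp(-u))) + u^(Suc m) * (\<Sum>j. b j * real j ^ m * exp(-u)^j)) (at_right 0)"
    using eventually_at_right_less[of 0]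
  proof eventually_elim
    case (elim u)
    define z where "z = exp (-u)"
    have z: "0 < z" "z < 1" using elim by (auto simp: z_def)
    have s1: "summable (\<lambda>j. if j = 0 then 0 else real j ^ m * z ^ j)" by (rule Pm_bounds(1)[where m=m, OF z])
    have s2: "summable (\<lambda>j. b j * real j ^ m * z ^ j)"
    proof (rule summable_comparison_test'[where g="\<lambda>j. (1 + \<bar>d\<bar>) * (real j^m * z^j)"])
      show "summable (\<lambda>j. (1 + \<bar>d\<bar>) * (real j^m * z^j))"
        by (intro summable_mult pow_series_bound) (use z in auto)
      fix j :: nat
      have "norm (b j * real j ^ m * z ^ j) = \<bar>b j\<bar> * (real j^m * z^j)" using z by (simp add: abs_mult)
      also have "\<dots> \<le> (1 + \<bar>d\<bar>) * (real j^m * z^j)" using bb[of j] z by (intro mult_right_mono) auto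
      finally show "norm (b j * real j ^ m * z ^ j) \<le> (1 + \<bar>d\<bar>) * (real j^m * z^j)" .
    qed
    have trm: "ind A j * real j ^ m * z ^ j = d * (if j = 0 then 0 else real j ^ m * z ^ j) + b j * real j ^ m * z ^ j" for j
      using A by (auto simp: b_def ind_def algebra_simps)
    have "SA A m z = (\<Sum>j. d * (if j = 0 then 0 else real j ^ m * z ^ j) + b j * real j ^ m * z ^ j)"
      unfolding SA_def trm ..
    also have "\<dots> = d * Pm m z + (\<Sum>j. b j * real j ^ m * z ^ j)"
      unfolding Pm_def using s1 s2 by (simp add: suminf_add[symmetric] suminf_mult[symmetric] summable_mult)
    finally show ?case unfolding z_def by (simp add: algebra_simps)
  qed
  have "((\<lambda>u. d * (u^Suc m * Pm m (exp(-u))) + u^(Suc m) * (\<Sum>j. b j * real j ^ m * exp(-u)^j))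
        \<longlongrightarrow> d * fact m + 0) (at_right 0)"
    by (intro tendsto_intros lim_Pm err)
  then show ?thesis using eq by (simp add: tendsto_cong)
qed




lemma series_deriv:
  fixes g :: "nat \<Rightarrow> nat \<Rightarrow> real \<Rightarrow> real"
  assumes D: "\<And>n m s. s < 0 \<Longrightarrow> (g n m has_real_derivative g n (Suc m) s) (at s)"
    and Bd: "\<And>m \<delta>. \<delta> > 0 \<Longrightarrow> \<exists>M. summable M \<and> (\<forall>n s. s \<le> -\<delta> \<longrightarrow> \<bar>g n m s\<bar> \<le> M n)"
    and s: "s < 0"
  shows "summable (\<lambda>n. g n m s)"
    "((\<lambda>s. \<Sum>n. g n m s) has_real_derivative (\<Sum>n. g n (Suc m) s)) (at s)"
proof -
  define \<delta> where "\<delta> = -s/2"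
  have \<delta>: "\<delta> > 0" using s by (simp add: \<delta>_def)
  define S where "S = {..< -\<delta>}"
  have sS: "s \<in> S" using s by (simp add: S_def \<delta>_def)
  obtain M where M: "summable M" "\<And>n x. x \<le> -\<delta> \<Longrightarrow> \<bar>g n m x\<bar> \<le> M n"
    using Bd[OF \<delta>, of m] by blast
  obtain M' where M': "summable M'" "\<And>n x. x \<le> -\<delta> \<Longrightarrow> \<bar>g n (Suc m) x\<bar> \<le> M' n"
    using Bd[OF \<delta>, of "Suc m"] by blast
  have s0: "summable (\<lambda>n. g n m s)"
  proof (rule summable_comparison_test'[OF M(1)])
    have sle: "s \<le> -\<delta>" using \<delta> by (simp add: \<delta>_def)
    fix n show "norm (g n m s) \<le> M n" using M(2)[OF sle] by simp
  qed
  show "summable (\<lambda>n. g n m s)" by (rule s0)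
  have conv: "convex S" by (simp add: S_def)
  have der: "\<And>n x. x \<in> S \<Longrightarrow> (g n m has_field_derivative g n (Suc m) x) (at x within S)"
  proof -
    fix n x assume "x \<in> S"
    then have "x < 0" using \<delta> by (simp add: S_def)
    then show "(g n m has_field_derivative g n (Suc m) x) (at x within S)"
      using has_field_derivative_at_within[OF D[of x n m]] by blast
  qed
  have uc: "uniformly_convergent_on S (\<lambda>n x. \<Sum>i<n. g i (Suc m) x)"
  proof (rule Weierstrass_m_test'[OF _ M'(1)])
    fix n x assume "x \<in> S"
    then have "x \<le> -\<delta>" by (simp add: S_def)
    then show "norm (g n (Suc m) x) \<le> M' n" using M'(2) by simp
  qed
  have int: "s \<in> interior S" using sS by (simp add: S_def interior_open)
  show "((\<lambda>s. \<Sum>n. g n m s) has_real_derivative (\<Sum>n. g n (Suc m) s)) (at s)"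
    by (rule has_field_derivative_series'(2)[OF conv der uc sS s0 int])
qed

lemma series_deriv_iter:
  fixes g :: "nat \<Rightarrow> nat \<Rightarrow> real \<Rightarrow> real"
  assumes D: "\<And>n m s. s < 0 \<Longrightarrow> (g n m has_real_derivative g n (Suc m) s) (at s)"
    and Bd: "\<And>m \<delta>. \<delta> > 0 \<Longrightarrow> \<exists>M. summable M \<and> (\<forall>n s. s \<le> -\<delta> \<longrightarrow> \<bar>g n m s\<bar> \<le> M n)"
    and F: "\<And>s. s < 0 \<Longrightarrow> F s = (\<Sum>n. g n 0 s)"
  shows "s < 0 \<Longrightarrow> (deriv ^^ m) F s = (\<Sum>n. g n m s)"
proof (induction m arbitrary: s)
  case 0 then show ?case using F by simp
next
  case (Suc m)
  have d: "((\<lambda>s. \<Sum>n. g n m s) has_real_derivative (\<Sum>n. g n (Suc m) s)) (at s)"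
    by (rule series_deriv(2)[where g=g, OF D Bd Suc.prems])
  have "((deriv ^^ m) F has_real_derivative (\<Sum>n. g n (Suc m) s)) (at s)"
  proof (rule has_field_derivative_transform_within_open[OF d, of "{..<0}"])
    show "open {..<(0::real)}" by simp
    show "s \<in> {..<0}" using Suc.prems by simp
    fix x :: real assume "x \<in> {..<0}"
    then have "x < 0" by simp
    then show "(\<Sum>n. g n m x) = (deriv ^^ m) F x" using Suc.IH by simp
  qed
  then have "deriv ((deriv ^^ m) F) s = (\<Sum>n. g n (Suc m) s)" by (rule DERIV_imp_deriv)
  then show ?case by simp
qed




definition gi :: "nat set \<Rightarrow> nat \<Rightarrow> nat \<Rightarrow> nat \<Rightarrow> real \<Rightarrow> real" where
  "gi A k j m s = ind A j * real (Suc k) ^ m * real j ^ m * exp (s * real (Suc k) * real j) / real (Suc k)"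

definition go :: "nat set \<Rightarrow> nat \<Rightarrow> nat \<Rightarrow> real \<Rightarrow> real" where
  "go A k m s = (\<Sum>j. gi A k j m s)"

lemma gi_deriv: "(gi A k j m has_real_derivative gi A k j (Suc m) s) (at s)"
proof -
  define K where "K = ind A j * real (Suc k) ^ m * real j ^ m / real (Suc k)"
  define a where "a = real (Suc k) * real j"
  have "((\<lambda>s. K * exp (s * a)) has_real_derivative K * (exp (s * a) * a)) (at s)"
    by (auto intro!: derivative_eq_intros)
  moreover have "(\<lambda>s. K * exp (s * a)) = gi A k j m"
    by (rule ext) (simp add: gi_def K_def a_def mult_ac)
  moreover have "K * (exp (s * a) * a) = gi A k j (Suc m) s"
    by (simp add: gi_def K_def a_def mult_ac)
  ultimately show ?thesis by simp
qed

lemma gi_bound: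
  assumes "\<delta> > 0" "s \<le> -\<delta>"
  shows "\<bar>gi A k j m s\<bar> \<le> real (Suc k) ^ m * (real j ^ m * exp (-\<delta>) ^ j)"
proof -
  define c where "c = real (Suc k)"
  have c1: "c \<ge> 1" by (simp add: c_def)
  have i01: "0 \<le> ind A j" "ind A j \<le> 1" by (auto simp: ind_def)
  have "s * c * real j \<le> -\<delta> * real j"
  proof -
    have s0: "s < 0" using assms by simp
    have "s * c \<le> s" using s0 c1 by (simp add: mult_le_cancel_left1)
    then have "s * c \<le> -\<delta>" using assms by linarith
    then show ?thesis by (intro mult_right_mono) auto
  qed
  then have e: "exp (s * c * real j) \<le> exp (-\<delta>) ^ j"
    by (simp add: exp_of_nat_mult[symmetric] mult.commute)
  have "\<bar>gi A k j m s\<bar> = ind A j * c ^ m * real j ^ m * exp (s * c * real j) / c"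
    using i01 c1 by (simp add: gi_def c_def abs_mult)
  also have "\<dots> \<le> ind A j * c ^ m * real j ^ m * exp (s * c * real j)"
  proof -
    define X where "X = ind A j * c ^ m * real j ^ m * exp (s * c * real j)"
    have X0: "X \<ge> 0" using i01 c1 by (simp add: X_def)
    have "X * 1 \<le> X * c" using c1 X0 by (intro mult_left_mono) auto
    then have "X / c \<le> X" using c1 by (simp add: divide_le_eq)
    then show ?thesis by (simp add: X_def)
  qed
  also have "\<dots> \<le> 1 * c ^ m * real j ^ m * exp (-\<delta>) ^ j"
    using i01 c1 e by (intro mult_mono) auto
  finally show ?thesis by (simp add: c_def mult_ac)
qed

lemma inner_Bd:
  assumes "\<delta> > 0"
  shows "\<exists>M. summable M \<and> (\<forall>j s. s \<le> -\<delta> \<longrightarrow> \<bar>gi A k j m s\<bar> \<le> M j)"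
proof (intro exI conjI allI impI)
  show "summable (\<lambda>j. real (Suc k) ^ m * (real j ^ m * exp (-\<delta>) ^ j))"
    using assms by (intro summable_mult pow_series_bound) auto
  fix j s assume "s \<le> -\<delta>"
  then show "\<bar>gi A k j m s\<bar> \<le> real (Suc k) ^ m * (real j ^ m * exp (-\<delta>) ^ j)"
    by (rule gi_bound[OF assms])
qed

lemma inner:
  assumes "s < 0"
  shows "summable (\<lambda>j. gi A k j m s)" "(go A k m has_real_derivative go A k (Suc m) s) (at s)"
proof -
  note sd = series_deriv[where g="\<lambda>j m s. gi A k j m s", OF gi_deriv inner_Bd assms]
  show "summable (\<lambda>j. gi A k j m s)" by (rule sd(1))
  have "go A k m = (\<lambda>s. \<Sum>j. gi A k j m s)" by (rule ext) (simp add: go_def)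
  then show "(go A k m has_real_derivative go A k (Suc m) s) (at s)"
    using sd(2)[of m] by (simp add: go_def)
qed

lemma go_eq:
  assumes A: "A \<subseteq> {1..}" and s: "s < 0"
  shows "go A k m s = real (Suc k) ^ m / real (Suc k) * SA A m (exp (s * real (Suc k)))"
proof -
  define c where "c = real (Suc k)"
  have z: "0 < exp (s * c)" "exp (s * c) < 1" using s by (auto simp: c_def mult_less_0_iff)
  have "go A k m s = (\<Sum>j. c ^ m / c * (ind A j * real j ^ m * exp (s * c) ^ j))"
    unfolding go_def gi_def c_def[symmetric]
    by (intro suminf_cong) (simp add: exp_of_nat_mult[symmetric] mult_ac)
  also have "\<dots> = c ^ m / c * SA A m (exp (s * c))"
    unfolding SA_def by (intro suminf_mult SA_le_Pm(1)[OF A z])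
  finally show ?thesis by (simp add: c_def)
qed

lemma go_bound:
  assumes A: "A \<subseteq> {1..}" and \<delta>: "\<delta> > 0" and s: "s \<le> -\<delta>"
  shows "\<bar>go A k m s\<bar> \<le> fact m * fact (Suc m) * exp 1 / \<delta>^Suc m * inverse (real (Suc k) ^ 2)"
proof -
  define c where "c = real (Suc k)"
  define B0 where "B0 = fact m * fact (Suc m) * exp (1::real)"
  define u where "u = - s * c"
  have c1: "c \<ge> 1" by (simp add: c_def)
  have s0: "s < 0" using s \<delta> by simp
  have u: "u \<ge> \<delta> * c" using mult_right_mono[of \<delta> "-s" c] s c1 by (simp add: u_def)
  have "\<delta> * c > 0" using \<delta> c1 by simp
  then have u0: "u > 0" using u by linarith
  have z: "0 < exp (-u)" "exp (-u) < 1" using u0 by auto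
  have ez: "exp (s * c) = exp (-u)" by (simp add: u_def)
  have SA0: "SA A m (exp (-u)) \<ge> 0"
    unfolding SA_def using z by (intro suminf_nonneg SA_le_Pm(1)[OF A z]) (auto simp: ind_def)
  have "u^Suc m * SA A m (exp (-u)) \<le> u^Suc m * Pm m (exp (-u))"
    using SA_le_Pm(2)[OF A z] u0 by (intro mult_left_mono) auto
  also have "\<dots> \<le> B0" unfolding B0_def by (rule bound_Pm[OF u0])
  finally have SAle: "SA A m (exp (-u)) \<le> B0 / u^Suc m" using u0 by (simp add: field_simps)
  also have "\<dots> \<le> B0 / (\<delta> * c)^Suc m"
    using u u0 \<delta> c1 by (intro divide_left_mono power_mono mult_pos_pos zero_less_power) (auto simp: B0_def)
  finally have SAle2: "SA A m (exp (-u)) \<le> B0 / (\<delta> * c)^Suc m" .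
  have "\<bar>go A k m s\<bar> = c ^ m / c * SA A m (exp (-u))"
    using go_eq[OF A s0, of k m] SA0 c1 ez by (simp add: c_def)
  also have "\<dots> \<le> c ^ m / c * (B0 / (\<delta> * c)^Suc m)"
    using c1 by (intro mult_left_mono SAle2) auto
  also have "\<dots> = B0 / \<delta>^Suc m * inverse (c^2)"
    using c1 \<delta> by (simp add: power_mult_distrib field_simps power2_eq_square)
  finally show ?thesis by (simp add: B0_def c_def)
qed

lemma outer_Bd:
  assumes A: "A \<subseteq> {1..}" and \<delta>: "\<delta> > 0"
  shows "\<exists>M. summable M \<and> (\<forall>k s. s \<le> -\<delta> \<longrightarrow> \<bar>go A k m s\<bar> \<le> M k)"
proof (intro exI conjI allI impI)
  have "summable (\<lambda>k. inverse (real k ^ 2))" by (rule inverse_power_summable) simp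
  then have "summable (\<lambda>k. inverse (real (Suc k) ^ 2))" by (subst summable_Suc_iff)
  then show "summable (\<lambda>k. fact m * fact (Suc m) * exp 1 / \<delta>^Suc m * inverse (real (Suc k) ^ 2))"
    by (rule summable_mult)
  fix k s assume "s \<le> -\<delta>"
  then show "\<bar>go A k m s\<bar> \<le> fact m * fact (Suc m) * exp 1 / \<delta>^Suc m * inverse (real (Suc k) ^ 2)"
    by (rule go_bound[OF A \<delta>])
qed




lemma outer:
  assumes A: "A \<subseteq> {1..}" and s: "s < 0"
  shows "summable (\<lambda>k. go A k m s)"
  using series_deriv(1)[where g="go A", OF inner(2) outer_Bd[OF A] s] by simp

lemma neg_ln_series:
  fixes y :: real
  assumes "0 < y" "y < 1"
  shows "- ln (1 - y) = (\<Sum>n. y ^ Suc n / real (Suc n))"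
proof -
  have "ln (1 - y) = (\<Sum>n. (-1)^n * (1 / real (n + 1)) * ((1 - y) - 1)^(Suc n))"
    using assms by (intro ln_series) auto
  also have "\<dots> = (\<Sum>n. - (y ^ Suc n / real (Suc n)))"
  proof (intro suminf_cong)
    fix n
    have a: "(-1::real)^n * (-y)^n = ((-1) * (-y))^n" by (rule power_mult_distrib[symmetric])
    have b: "((-1::real) * (-y))^n = y^n" by simp
    have c: "((1 - y) - 1)^(Suc n) = (-y) * (-y)^n" by simp
    have "(-1)^n * (1 / real (n + 1)) * ((1 - y) - 1)^(Suc n)
        = (1 / real (n + 1)) * (-y) * ((-1)^n * (-y)^n)"
      unfolding c by (simp only: mult_ac)
    also have "\<dots> = (1 / real (n + 1)) * (-y) * y^n" unfolding a b ..
    also have "\<dots> = - (y ^ Suc n / real (Suc n))" by simp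
    finally show "(-1)^n * (1 / real (n + 1)) * ((1 - y) - 1)^(Suc n) = - (y ^ Suc n / real (Suc n))" .
  qed
  also have "\<dots> = - (\<Sum>n. y ^ Suc n / real (Suc n))"
  proof (rule suminf_minus)
    show "summable (\<lambda>n. y ^ Suc n / real (Suc n))"
    proof (rule summable_comparison_test'[where g="\<lambda>n. y ^ Suc n"])
      show "summable (\<lambda>n. y ^ Suc n)" using assms by (simp add: summable_geometric)
      fix n
      have "y ^ Suc n / real (Suc n) \<le> y ^ Suc n / 1"
        using assms by (intro divide_left_mono) auto
      then show "norm (y ^ Suc n / real (Suc n)) \<le> y ^ Suc n"
        using assms by simp
    qed
  qed
  finally show ?thesis by simp
qed

lemma fulcrum_expand:
  assumes A: "A \<subseteq> {1..}" and s: "s < 0"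
  shows "fulcrum A s = (\<Sum>k. go A k 0 s)"
proof -
  define t where "t j k = gi A k j 0 s" for j k
  have nn: "t j k \<ge> 0" for j k by (simp add: t_def gi_def ind_def)
  have s1: "summable (\<lambda>j. t j k)" for k unfolding t_def by (rule inner(1)[OF s])
  have s2: "summable (\<lambda>k. \<Sum>j. t j k)" using outer[OF A s, of 0] by (simp add: t_def go_def)
  have Lj: "- (if j \<in> A then ln (1 - exp (s * real j)) else 0) = (\<Sum>k. t j k)" for j
  proof (cases "j \<in> A")
    case True
    then have j1: "j \<ge> 1" using A by auto
    have y: "0 < exp (s * real j)" "exp (s * real j) < 1" using s j1 by (auto simp: mult_less_0_iff)
    have "- ln (1 - exp (s * real j)) = (\<Sum>n. exp (s * real j) ^ Suc n / real (Suc n))"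
      by (rule neg_ln_series[OF y])
    also have "\<dots> = (\<Sum>k. t j k)"
    proof (intro suminf_cong)
      fix k
      have "exp (s * real j) ^ Suc k = exp (real (Suc k) * (s * real j))"
        by (rule exp_of_nat_mult[symmetric])
      also have "real (Suc k) * (s * real j) = s * real (Suc k) * real j"
        by (simp only: mult.assoc mult.commute mult.left_commute)
      finally have "exp (s * real j) ^ Suc k = exp (s * real (Suc k) * real j)" .
      then show "exp (s * real j) ^ Suc k / real (Suc k) = t j k"
        using True by (simp add: t_def gi_def ind_def)
    qed
    finally show ?thesis using True by simp
  next
    case False
    then show ?thesis by (simp add: t_def gi_def ind_def)
  qed
  have sw: "summable (\<lambda>j. \<Sum>k. t j k)" "(\<Sum>j. \<Sum>k. t j k) = (\<Sum>k. \<Sum>j. t j k)"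
    using nonneg_swap[OF nn s1 s2] by auto
  define L where "L j = (if j \<in> A then ln (1 - exp (s * real j)) else 0)" for j
  have Lj': "L j = - (\<Sum>k. t j k)" for j
  proof -
    have "- (L j) = (\<Sum>k. t j k)" using Lj[of j] by (simp only: L_def)
    then show ?thesis by simp
  qed
  have Lsum: "summable L"
  proof -
    have "summable (\<lambda>j. - (\<Sum>k. t j k))" using sw(1) by (rule summable_minus)
    moreover have "(\<lambda>j. - (\<Sum>k. t j k)) = L" using Lj' by (simp add: fun_eq_iff)
    ultimately show ?thesis by simp
  qed
  have "fulcrum A s = - (\<Sum>j. L j)" by (simp add: fulcrum_def L_def)
  also have "\<dots> = (\<Sum>j. - L j)" by (rule suminf_minus[OF Lsum, symmetric])
  also have "\<dots> = (\<Sum>j. \<Sum>k. t j k)" by (simp add: Lj')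
  also have "\<dots> = (\<Sum>k. \<Sum>j. t j k)" by (rule sw(2))
  also have "\<dots> = (\<Sum>k. go A k 0 s)" by (simp add: t_def go_def)
  finally show ?thesis .
qed

lemma deriv_fulcrum:
  assumes A: "A \<subseteq> {1..}" and s: "s < 0"
  shows "(deriv ^^ m) (fulcrum A) s = (\<Sum>k. go A k m s)"
  by (rule series_deriv_iter[where g="go A", OF inner(2) outer_Bd[OF A] fulcrum_expand[OF A] s])




theorem proposition4p4:
  fixes A :: "nat set" and d :: real and m :: nat
  assumes "A \<subseteq> {1..}"
    and "(\<lambda>n. real (card (A \<inter> {1..n})) / real n) \<longlonglongrightarrow> d"
    and "d > 0"
  shows "(\<lambda>s. (deriv ^^ m) (fulcrum A) (- s)) \<sim>[at_right 0]
           (\<lambda>s. d * zeta_real 2 * Gamma (real m + 1) / s ^ (m + 1))"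
proof -
  note A = assms(1) and dens = assms(2) and d0 = assms(3)
  define \<phi> where "\<phi> u = u^Suc m * SA A m (exp(-u))" for u
  define c where "c k = real (Suc k)" for k
  define B0 where "B0 = fact m * fact (Suc m) * exp (1::real)"
  have c1: "c k \<ge> 1" for k by (simp add: c_def)
  have \<phi>lim: "(\<phi> \<longlongrightarrow> d * fact m) (at_right 0)"
    unfolding \<phi>_def by (rule SA_lim[OF A dens])
  have \<phi>b: "0 \<le> \<phi> u \<and> \<phi> u \<le> B0" if u: "u > 0" for u
  proof -
    have z: "0 < exp (-u)" "exp (-u) < 1" using u by auto
    have SA0: "SA A m (exp (-u)) \<ge> 0"
      unfolding SA_def using z by (intro suminf_nonneg SA_le_Pm(1)[OF A z]) (auto simp: ind_def)
    have "u^Suc m * SA A m (exp (-u)) \<le> u^Suc m * Pm m (exp (-u))"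
      using SA_le_Pm(2)[OF A z] u by (intro mult_left_mono) auto
    also have "\<dots> \<le> B0" unfolding B0_def by (rule bound_Pm[OF u])
    finally show ?thesis using SA0 u by (simp add: \<phi>_def)
  qed
  have sinv: "summable (\<lambda>k. inverse (c k ^ 2))"
  proof -
    have "summable (\<lambda>k. inverse (real k ^ 2))" by (rule inverse_power_summable) simp
    then show ?thesis unfolding c_def by (subst summable_Suc_iff)
  qed
  define h where "h k x = inverse (c k ^ 2) * \<phi> (x * c k)" for k x
  have hk_lim: "((\<lambda>x. h k x) \<longlongrightarrow> inverse (c k ^ 2) * (d * fact m)) (at_right 0)" for k
  proof -
    have t0: "((\<lambda>x. x * c k) \<longlongrightarrow> 0 * c k) (at_right 0)" by (intro tendsto_intros)
    have "filterlim (\<lambda>x. x * c k) (at_right 0) (at_right 0)"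
      unfolding filterlim_at
    proof
      show "\<forall>\<^sub>F x in at_right 0. x * c k \<in> {0<..} \<and> x * c k \<noteq> 0"
        using eventually_at_right_less[of "0::real"]
        by eventually_elim (use c1[of k] in auto)
      show "((\<lambda>x. x * c k) \<longlongrightarrow> 0) (at_right 0)" using t0 by simp
    qed
    then have "((\<lambda>x. \<phi> (x * c k)) \<longlongrightarrow> d * fact m) (at_right 0)"
      by (rule filterlim_compose[OF \<phi>lim])
    then show ?thesis unfolding h_def by (intro tendsto_intros)
  qed
  have unif: "uniform_limit {0<..} (\<lambda>n x. \<Sum>k<n. h k x) (\<lambda>x. \<Sum>k. h k x) sequentially"
  proof (rule Weierstrass_m_test[where M="\<lambda>k. inverse (c k ^ 2) * B0"])
    fix k and x :: real assume "x \<in> {0<..}"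
    then have "x * c k > 0" using c1[of k] by simp
    then have "0 \<le> \<phi> (x * c k)" "\<phi> (x * c k) \<le> B0" using \<phi>b by auto
    then show "norm (h k x) \<le> inverse (c k ^ 2) * B0"
      unfolding h_def using c1[of k] by (simp add: abs_mult mult_left_mono)
  next
    show "summable (\<lambda>k. inverse (c k ^ 2) * B0)" by (rule summable_mult2[OF sinv])
  qed
  have lim: "((\<lambda>x. \<Sum>k. h k x) \<longlongrightarrow> (\<Sum>k. inverse (c k ^ 2) * (d * fact m))) (at 0 within {0<..})"
  proof (rule swap_uniform_limit[OF _ _ unif])
    show "\<forall>\<^sub>F n in sequentially. ((\<lambda>x. \<Sum>k<n. h k x) \<longlongrightarrow> (\<Sum>k<n. inverse (c k ^ 2) * (d * fact m))) (at 0 within {0<..})"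
      by (intro always_eventually allI tendsto_sum hk_lim)
    show "(\<lambda>n. \<Sum>k<n. inverse (c k ^ 2) * (d * fact m)) \<longlonglongrightarrow> (\<Sum>k. inverse (c k ^ 2) * (d * fact m))"
      by (intro summable_LIMSEQ summable_mult2 sinv)
  qed simp
  have zeta: "zeta_real 2 = (\<Sum>k. inverse (c k ^ 2))"
    unfolding zeta_real_def c_def by (simp add: divide_inverse)
  have zpos: "zeta_real 2 > 0"
    unfolding zeta using sinv by (intro suminf_pos) (auto simp: c_def)
  have L: "(\<Sum>k. inverse (c k ^ 2) * (d * fact m)) = zeta_real 2 * d * fact m"
    using suminf_mult2[OF sinv, of "d * fact m"] zeta by simp
  have eq: "eventually (\<lambda>x. x^Suc m * (deriv ^^ m) (fulcrum A) (-x) = (\<Sum>k. h k x)) (at_right 0)"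
    using eventually_at_right_less[of "0::real"]
  proof eventually_elim
    case (elim x)
    have nx: "-x < 0" using elim by simp
    have "x^Suc m * (deriv ^^ m) (fulcrum A) (-x) = x^Suc m * (\<Sum>k. go A k m (-x))"
      by (simp add: deriv_fulcrum[OF A nx])
    also have "\<dots> = (\<Sum>k. x^Suc m * go A k m (-x))"
      by (rule suminf_mult[OF outer[OF A nx], symmetric])
    also have "\<dots> = (\<Sum>k. h k x)"
    proof (intro suminf_cong)
      fix k
      have "x^Suc m * go A k m (-x) = x^Suc m * (c k ^ m / c k * SA A m (exp (-(x * c k))))"
        using go_eq[OF A nx, of k m] by (simp add: c_def)
      also have "\<dots> = inverse (c k ^ 2) * ((x * c k)^Suc m * SA A m (exp (-(x * c k))))"
        using c1[of k] by (simp add: power_mult_distrib field_simps power2_eq_square)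
      also have "\<dots> = h k x" by (simp add: h_def \<phi>_def)
      finally show "x^Suc m * go A k m (-x) = h k x" .
    qed
    finally show ?case .
  qed
  have lim2: "((\<lambda>x. x^Suc m * (deriv ^^ m) (fulcrum A) (-x)) \<longlongrightarrow> zeta_real 2 * d * fact m) (at_right 0)"
    using lim L eq by (simp add: tendsto_cong)
  have G: "Gamma (real m + 1) = fact m"
    using Gamma_fact[of m] by (simp add: add.commute)
  have pos: "d * zeta_real 2 * fact m > 0" using d0 zpos by simp
  show ?thesis
  proof (rule asymp_equivI')
    have eq2: "eventually (\<lambda>x. (deriv ^^ m) (fulcrum A) (- x) / (d * zeta_real 2 * Gamma (real m + 1) / x ^ (m + 1))
       = (x^Suc m * (deriv ^^ m) (fulcrum A) (-x)) / (d * zeta_real 2 * fact m)) (at_right 0)"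
      using eventually_at_right_less[of "0::real"]
      by eventually_elim (use pos in \<open>simp add: G Gamma_fact field_simps\<close>)
    have "((\<lambda>x. (x^Suc m * (deriv ^^ m) (fulcrum A) (-x)) / (d * zeta_real 2 * fact m))
        \<longlongrightarrow> (zeta_real 2 * d * fact m) / (d * zeta_real 2 * fact m)) (at_right 0)"
      by (rule tendsto_divide[OF lim2 tendsto_const]) (use d0 zpos in simp)
    moreover have "(zeta_real 2 * d * fact m) / (d * zeta_real 2 * fact m) = 1" using d0 zpos by simp
    ultimately show "((\<lambda>x. (deriv ^^ m) (fulcrum A) (- x) / (d * zeta_real 2 * Gamma (real m + 1) / x ^ (m + 1))) \<longlongrightarrow> 1) (at_right 0)"
      using eq2 by (simp add: tendsto_cong)
  qed
qed


end
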